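(* Let $\mathcal{Z}=\mathcal{X}\times\mathcal{Y}$ with $\mathcal{X}\subseteq\mathbb{R}^d$, let $\mathcal{D}_S$ (source) and $\mathcal{D}_T$ (target) be probability distributions on $\mathcal{Z}$, let $S=\{\boldsymbol{z}_i\}_{i=1}^n$ be a training set of $n$ i.i.d. samples from $\mathcal{D}_S$, and let $\hat{\mathcal{D}}_T$ be an empirical sample of size $n$ drawn i.i.d. from $\mathcal{D}_T$. Assume the loss satisfies $0\le \ell_{\boldsymbol{\theta}}(\boldsymbol{z})\le M$ for all $\boldsymbol{z}\in\mathcal{Z}$. Then for every $\delta\in(0,1)$, with probability at least $1-\delta$ (over the choice of the samples), for every model $f_{\boldsymbol{\theta}}$ trained on $S$ that is $(K,\epsilon(S))$-robust with partition $\{C_i\}_{i=1}^K$, we have $$\mathcal{L}_T(f_{\boldsymbol{\theta}})\le \widehat{\mathcal{L}}_S(f_{\boldsymbol{\theta}})+M\, d_{(\epsilon,K)}(S,\hat{\mathcal{D}}_T)+2\epsilon(S)+3M\sqrt{\frac{2K\ln 2+2\ln(2/\delta)}{n}},$$ where $d_{(\epsilon,K)}(S,\hat{\mathcal{D}}_T):=\sum_{i=1}^K\left|\frac{n_i(S)}{n}-\frac{n_i(\hat{\mathcal{D}}_T)}{n}\right|$ and $n_i(S)$, $n_i(\hat{\mathcal{D}}_T)$ denote the numbers of samples of $S$ and of $\hat{\mathcal{D}}_T$, respectively, that fall into $C_i$.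
   Context: A model $f_{\boldsymbol{\theta}}$ with parameters $\boldsymbol{\theta}$ maps inputs $\boldsymbol{x}\in\mathcal{X}$ to $\mathbb{R}$; for $\boldsymbol{z}=(\boldsymbol{x},y)$ write $\ell_{\boldsymbol{\theta}}(\boldsymbol{z})=\ell(f(\boldsymbol{\theta},\boldsymbol{x}),y)$ for a loss $\ell:\mathbb{R}\times\mathbb{R}\to\mathbb{R}_+$. Expected risks: $\mathcal{L}_S(f_{\boldsymbol{\theta}})=\mathbb{E}_{\boldsymbol{z}\sim\mathcal{D}_S}[\ell_{\boldsymbol{\theta}}(\boldsymbol{z})]$, $\mathcal{L}_T(f_{\boldsymbol{\theta}})=\mathbb{E}_{\boldsymbol{z}\sim\mathcal{D}_T}[\ell_{\boldsymbol{\theta}}(\boldsymbol{z})]$; empirical source risk $\widehat{\mathcal{L}}_S(f_{\boldsymbol{\theta}})=\frac1n\sum_{\boldsymbol{z}_i\in S}\ell_{\boldsymbol{\theta}}(\boldsymbol{z}_i)$. Robustness (Xu–Mannor): a model $f_{\boldsymbol{\theta}}$ trained on $S$ is $(K,\epsilon(S))$-robust, for $K\in\mathbb{N}$, if $\mathcal{Z}$ can be partitioned into $K$ disjoint sets $\{C_i\}_{i=1}^K$ such that for all $\boldsymbol{s}\in S$ and $\boldsymbol{z}\in\mathcal{Z}$ and all $i\in[K]$: $\boldsymbol{s},\boldsymbol{z}\in C_i\Rightarrow|\ell_{\boldsymbol{\theta}}(\boldsymbol{s})-\ell_{\boldsymbol{\theta}}(\boldsymbol{z})|\le\epsilon(S)$.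 *)

theory Defs
  imports "HOL-Probability.Probability"
begin

definition loss_at :: "(real \<Rightarrow> real \<Rightarrow> real) \<Rightarrow> ('p \<Rightarrow> 'x \<Rightarrow> real) \<Rightarrow> 'p \<Rightarrow> 'x \<times> real \<Rightarrow> real" where
  "loss_at l f th z = l (f th (fst z)) (snd z)"

definition expected_risk :: "('x \<times> real) measure \<Rightarrow> (real \<Rightarrow> real \<Rightarrow> real) \<Rightarrow> ('p \<Rightarrow> 'x \<Rightarrow> real) \<Rightarrow> 'p \<Rightarrow> real" where
  "expected_risk D l f th = (\<integral>z. loss_at l f th z \<partial>D)"

definition empirical_risk :: "nat \<Rightarrow> (nat \<Rightarrow> 'x \<times> real) \<Rightarrow> (real \<Rightarrow> real \<Rightarrow> real) \<Rightarrow> ('p \<Rightarrow> 'x \<Rightarrow> real) \<Rightarrow> 'p \<Rightarrow> real" where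
  "empirical_risk n S l f th = (\<Sum>j<n. loss_at l f th (S j)) / real n"

definition is_partition :: "'z set \<Rightarrow> nat \<Rightarrow> (nat \<Rightarrow> 'z set) \<Rightarrow> bool" where
  "is_partition Z K C \<longleftrightarrow>
     (\<forall>i<K. C i \<subseteq> Z) \<and> (\<Union>i<K. C i) = Z \<and> (\<forall>i<K. \<forall>j<K. i \<noteq> j \<longrightarrow> C i \<inter> C j = {})"

definition robust :: "'z set \<Rightarrow> nat \<Rightarrow> (nat \<Rightarrow> 'z set) \<Rightarrow> ('z \<Rightarrow> real) \<Rightarrow> nat \<Rightarrow> (nat \<Rightarrow> 'z) \<Rightarrow> real \<Rightarrow> bool" where
  "robust Z K C L n S eps \<longleftrightarrow>
     (\<forall>s \<in> S ` {..<n}. \<forall>z \<in> Z. \<forall>i<K. s \<in> C i \<and> z \<in> C i \<longrightarrow> \<bar>L s - L z\<bar> \<le> eps)"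

definition n_in :: "(nat \<Rightarrow> 'z set) \<Rightarrow> nat \<Rightarrow> nat \<Rightarrow> (nat \<Rightarrow> 'z) \<Rightarrow> nat" where
  "n_in C i n S = card {j \<in> {..<n}. S j \<in> C i}"

definition d_epsK :: "nat \<Rightarrow> (nat \<Rightarrow> 'z set) \<Rightarrow> nat \<Rightarrow> (nat \<Rightarrow> 'z) \<Rightarrow> (nat \<Rightarrow> 'z) \<Rightarrow> real" where
  "d_epsK K C n S T = (\<Sum>i<K. \<bar>real (n_in C i n S) / real n - real (n_in C i n T) / real n\<bar>)"

end

theory Submission
  imports Defs
begin


lemma sum_ind_le1:
  fixes C :: "nat \<Rightarrow> 'a set"
  assumes disj: "\<forall>i<K. \<forall>j<K. i \<noteq> j \<longrightarrow> C i \<inter> C j = {}" and A: "A \<subseteq> {..<K}"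
  shows "(\<Sum>i\<in>A. indicator (C i) z :: real) \<in> {0..1}"
proof -
  have fin: "finite A" using A finite_subset by blast
  have "(\<Sum>i\<in>A. indicator (C i) z :: real) = real (card {i\<in>A. z \<in> C i})"
    using fin by (simp add: indicator_def sum_of_bool_eq Int_def)
  moreover have "card {i\<in>A. z \<in> C i} \<le> 1"
  proof -
    have "finite {i\<in>A. z \<in> C i}" using fin by auto
    moreover have "\<forall>x\<in>{i\<in>A. z \<in> C i}. \<forall>y\<in>{i\<in>A. z \<in> C i}. x = y"
    proof (intro ballI)
      fix x y assume "x \<in> {i\<in>A. z \<in> C i}" "y \<in> {i\<in>A. z \<in> C i}"
      then have "x < K" "y < K" "z \<in> C x \<inter> C y" using A by auto
      then show "x = y" using disj by (metis empty_iff)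
    qed
    ultimately show ?thesis by (simp add: card_le_Suc0_iff_eq)
  qed
  ultimately show ?thesis by auto
qed

lemma n_in_sum: "real (n_in C i n S) = (\<Sum>j<n. indicator (C i) (S j))"
  by (simp add: n_in_def indicator_def sum_of_bool_eq Int_def)

lemma sum_ind_eq1:
  fixes C :: "nat \<Rightarrow> 'a set"
  assumes "is_partition Z K C" "z \<in> Z"
  shows "(\<Sum>i<K. indicator (C i) z :: real) = 1"
proof -
  from assms obtain i0 where i0: "i0 < K" "z \<in> C i0" unfolding is_partition_def by auto
  have "(\<Sum>i<K. indicator (C i) z :: real) = indicator (C i0) z + (\<Sum>i\<in>{..<K}-{i0}. indicator (C i) z)"
    using i0 by (subst sum.remove[of _ i0]) auto
  also have "(\<Sum>i\<in>{..<K}-{i0}. indicator (C i) z :: real) = 0"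
    using assms i0 unfolding is_partition_def by (intro sum.neutral) (auto simp: indicator_def, blast)
  finally show ?thesis using i0 by simp
qed



lemma indep_coords:
  fixes D :: "'a measure"
  assumes D: "prob_space D" and n: "n > 0"
  shows "prob_space.indep_vars (PiM {..<n} (\<lambda>_. D)) (\<lambda>_. D) (\<lambda>j T. T j) {..<n}"
proof -
  let ?P = "PiM {..<n} (\<lambda>_. D)"
  interpret P: prob_space ?P by (rule prob_space_PiM) (use D in auto)
  have ne: "{..<n} \<noteq> {}" using n by auto
  have "distr ?P (PiM {..<n} (\<lambda>_. D)) (\<lambda>x. \<lambda>i\<in>{..<n}. x i) = distr ?P ?P (\<lambda>x. x)"
    by (rule distr_cong) (auto simp: space_PiM PiE_def extensional_restrict)
  also have "\<dots> = ?P" by simp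
  also have "\<dots> = PiM {..<n} (\<lambda>i. distr ?P D (\<lambda>x. x i))"
    by (rule PiM_cong) (auto intro!: distr_PiM_component[symmetric] D)
  finally show ?thesis
    by (subst P.indep_vars_iff_distr_eq_PiM'[OF ne]) auto
qed



lemma hoeff_A:
  fixes D :: "'a measure" and C :: "nat \<Rightarrow> 'a set"
  assumes D: "prob_space D" and n: "n > 0" and Cm: "\<And>i. i < K \<Longrightarrow> C i \<in> sets D"
    and disj: "\<forall>i<K. \<forall>j<K. i \<noteq> j \<longrightarrow> C i \<inter> C j = {}" and A: "A \<subseteq> {..<K}" and t: "t \<ge> 0"
  shows "measure (PiM {..<n} (\<lambda>_. D)) {T\<in>space (PiM {..<n} (\<lambda>_. D)).
            (\<Sum>j<n. \<Sum>i\<in>A. indicator (C i) (T j)) \<ge> real n * (\<Sum>i\<in>A. measure D (C i)) + real n * t}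
          \<le> exp (- 2 * real n * t\<^sup>2)"
    and "measure (PiM {..<n} (\<lambda>_. D)) {T\<in>space (PiM {..<n} (\<lambda>_. D)).
            (\<Sum>j<n. \<Sum>i\<in>A. indicator (C i) (T j)) \<le> real n * (\<Sum>i\<in>A. measure D (C i)) - real n * t}
          \<le> exp (- 2 * real n * t\<^sup>2)"
proof -
  let ?P = "PiM {..<n} (\<lambda>_. D)"
  interpret P: prob_space ?P by (rule prob_space_PiM) (use D in auto)
  interpret D: prob_space D by (rule D)
  define g where "g z = (\<Sum>i\<in>A. indicator (C i) z :: real)" for z
  have finA: "finite A" using A finite_subset by blast
  have Cm': "i \<in> A \<Longrightarrow> C i \<in> sets D" for i using A Cm by auto
  have gm[measurable]: "g \<in> borel_measurable D"
    unfolding g_def using Cm' by (intro borel_measurable_sum) auto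
  have g01: "g z \<in> {0..1}" for z unfolding g_def by (rule sum_ind_le1[OF disj A])
  have intg: "(\<integral>z. g z \<partial>D) = (\<Sum>i\<in>A. measure D (C i))"
  proof -
    have "(\<integral>z. (\<Sum>i\<in>A. indicator (C i) z :: real) \<partial>D) = (\<Sum>i\<in>A. \<integral>z. indicator (C i) z \<partial>D)"
      by (rule Bochner_Integration.integral_sum[where f="\<lambda>i z. indicator (C i) z :: real"]) (use Cm' in \<open>auto intro!: integrable_real_indicator simp: D.emeasure_eq_measure\<close>)
    then show ?thesis unfolding g_def using Cm' by (auto intro!: sum.cong)
  qed
  have expj: "P.expectation (\<lambda>T. g (T j)) = (\<Sum>i\<in>A. measure D (C i))" if j: "j < n" for j
  proof -
    have "P.expectation (\<lambda>T. g (T j)) = (\<integral>z. g z \<partial>(distr ?P D (\<lambda>T. T j)))"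
      by (subst integral_distr) (auto simp: j)
    also have "distr ?P D (\<lambda>T. T j) = D" by (rule distr_PiM_component) (use D j in auto)
    finally show ?thesis using intg by simp
  qed
  have indep: "P.indep_vars (\<lambda>_. borel) (\<lambda>j T. g (T j)) {..<n}"
    by (rule P.indep_vars_compose2[OF indep_coords[OF D n]]) auto
  interpret H: Hoeffding_ineq ?P "{..<n}" "\<lambda>j T. g (T j)" "\<lambda>_. 0" "\<lambda>_. 1"
     "\<Sum>j<n. P.expectation (\<lambda>T. g (T j))"
    by unfold_locales (use indep g01 in auto)
  have mu: "(\<Sum>j<n. P.expectation (\<lambda>T. g (T j))) = real n * (\<Sum>i\<in>A. measure D (C i))"
    using expj by simp
  have nt: "real n * t \<ge> 0" using t by simp
  have pos: "(\<Sum>i<n. ((\<lambda>_. 1::real) i - (\<lambda>_. 0) i)\<^sup>2) > 0" using n by simp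
  have ex: "exp (-2 * (real n * t)\<^sup>2 / (\<Sum>i<n. ((\<lambda>_. 1::real) i - (\<lambda>_. 0) i)\<^sup>2)) = exp (- 2 * real n * t\<^sup>2)"
    using n by (simp add: power2_eq_square)
  show "measure ?P {T\<in>space ?P.
            (\<Sum>j<n. \<Sum>i\<in>A. indicator (C i) (T j)) \<ge> real n * (\<Sum>i\<in>A. measure D (C i)) + real n * t}
          \<le> exp (- 2 * real n * t\<^sup>2)"
    using H.Hoeffding_ineq_ge[OF nt pos, unfolded ex mu] unfolding g_def .
  show "measure ?P {T\<in>space ?P.
            (\<Sum>j<n. \<Sum>i\<in>A. indicator (C i) (T j)) \<le> real n * (\<Sum>i\<in>A. measure D (C i)) - real n * t}
          \<le> exp (- 2 * real n * t\<^sup>2)"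
    using H.Hoeffding_ineq_le[OF nt pos, unfolded ex mu] unfolding g_def .
qed



lemma conc:
  fixes D :: "'a measure" and C :: "nat \<Rightarrow> 'a set" and \<delta> :: real
  assumes D: "prob_space D" and n: "n > 0" and Cm: "\<And>i. i < K \<Longrightarrow> C i \<in> sets D"
    and disj: "\<forall>i<K. \<forall>j<K. i \<noteq> j \<longrightarrow> C i \<inter> C j = {}" and d0: "0 < \<delta>" and d1: "\<delta> < 1"
  shows "\<exists>ET\<in>sets (PiM {..<n} (\<lambda>_. D)). measure (PiM {..<n} (\<lambda>_. D)) ET \<ge> 1 - \<delta> \<and>
     (\<forall>T\<in>ET. (\<Sum>i<K. \<bar>real (n_in C i n T) / real n - measure D (C i)\<bar>)
               \<le> sqrt ((2 * real K * ln 2 + 2 * ln (2 / \<delta>)) / real n))"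
proof -
  let ?P = "PiM {..<n} (\<lambda>_. D)"
  interpret P: prob_space ?P by (rule prob_space_PiM) (use D in auto)
  interpret D: prob_space D by (rule D)
  define a where "a = real K * ln 2 + ln (2 / \<delta>)"
  have lnpos: "ln (2 / \<delta>) > 0" using d0 d1 by simp
  have a0: "a > 0" unfolding a_def using lnpos by (simp add: add_nonneg_pos)
  define t where "t = sqrt (a / (2 * real n))"
  have t0: "t \<ge> 0" unfolding t_def using a0 n by simp
  have t2: "2 * real n * t\<^sup>2 = a" unfolding t_def using a0 n by simp
  have ea: "exp (- a) = \<delta> / (2 * 2 ^ K)"
  proof -
    have "exp (- a) = inverse (exp (real K * ln 2) * exp (ln (2 / \<delta>)))"
      unfolding a_def by (simp add: exp_diff exp_minus field_simps)
    also have "exp (real K * ln 2) = 2 ^ K" by (simp add: exp_of_nat_mult)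
    also have "exp (ln (2 / \<delta>)) = 2 / \<delta>" using d0 by simp
    finally show ?thesis by (simp add: field_simps)
  qed
  define F where "F A T = (\<Sum>j<n. \<Sum>i\<in>A. indicator (C i) (T j) :: real)" for A T
  define pA where "pA A = (\<Sum>i\<in>A. measure D (C i))" for A
  define B where "B x = (if snd x then {T\<in>space ?P. F (fst x) T \<ge> real n * pA (fst x) + real n * t}
                         else {T\<in>space ?P. F (fst x) T \<le> real n * pA (fst x) - real n * t})" for x
  define I where "I = Pow {..<K} \<times> (UNIV :: bool set)"
  have finI: "finite I" unfolding I_def by simp
  have cardI: "card I = 2 ^ K * 2" unfolding I_def by (simp add: card_cartesian_product card_Pow)
  have Fm: "F A \<in> borel_measurable ?P" if "A \<subseteq> {..<K}" for A
  proof -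
    have "(\<lambda>T. indicator (C i) (T j) :: real) \<in> borel_measurable ?P" if "i \<in> A" "j < n" for i j
      using that \<open>A \<subseteq> {..<K}\<close> Cm
      by (intro measurable_compose[OF measurable_component_singleton borel_measurable_indicator]) auto
    then show ?thesis unfolding F_def by (intro borel_measurable_sum) auto
  qed
  have Bm: "B x \<in> sets ?P" if "x \<in> I" for x
  proof -
    have [measurable]: "F (fst x) \<in> borel_measurable ?P" using that Fm unfolding I_def by auto
    show ?thesis unfolding B_def by (cases "snd x") (simp_all add: borel_measurable_le)
  qed
  have Bp: "measure ?P (B x) \<le> \<delta> / (2 * 2 ^ K)" if "x \<in> I" for x
  proof -
    have A: "fst x \<subseteq> {..<K}" using that unfolding I_def by auto
    note h = hoeff_A[OF D n Cm disj A t0]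
    have "measure ?P (B x) \<le> exp (- 2 * real n * t\<^sup>2)"
      using h unfolding B_def F_def pA_def by auto
    also have "\<dots> = exp (- a)" using t2 by (simp add: mult.assoc)
    finally show ?thesis using ea by simp
  qed
  have Ubound: "measure ?P (\<Union>x\<in>I. B x) \<le> \<delta>"
  proof -
    have "measure ?P (\<Union>x\<in>I. B x) \<le> (\<Sum>x\<in>I. measure ?P (B x))"
      by (rule measure_UNION_le[OF finI Bm])
    also have "\<dots> \<le> (\<Sum>x\<in>I. \<delta> / (2 * 2 ^ K))" by (rule sum_mono[OF Bp])
    also have "\<dots> = \<delta>" using cardI by simp
    finally show ?thesis .
  qed
  define ET where "ET = space ?P - (\<Union>x\<in>I. B x)"
  have Um: "(\<Union>x\<in>I. B x) \<in> sets ?P" using Bm finI by auto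
  have ETm: "ET \<in> sets ?P" unfolding ET_def using Um by auto
  have ETp: "measure ?P ET \<ge> 1 - \<delta>" unfolding ET_def using P.prob_compl[OF Um] Ubound by simp
  have good: "(\<Sum>i<K. \<bar>real (n_in C i n T) / real n - measure D (C i)\<bar>)
               \<le> sqrt ((2 * real K * ln 2 + 2 * ln (2 / \<delta>)) / real n)" if T: "T \<in> ET" for T
  proof -
    define q where "q i = real (n_in C i n T) / real n" for i
    define p where "p i = measure D (C i)" for i
    define Ap where "Ap = {i\<in>{..<K}. q i \<ge> p i}"
    define Am where "Am = {..<K} - Ap"
    have FA: "F A T = real n * (\<Sum>i\<in>A. q i)" if "finite A" for A
    proof -
      have "F A T = (\<Sum>i\<in>A. \<Sum>j<n. indicator (C i) (T j))" unfolding F_def by (rule sum.swap)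
      also have "\<dots> = (\<Sum>i\<in>A. real (n_in C i n T))" by (simp only: n_in_sum)
      also have "\<dots> = real n * (\<Sum>i\<in>A. q i)" unfolding q_def using n by (simp add: sum_distrib_left)
      finally show ?thesis .
    qed
    have nB1: "T \<notin> B (Ap, True)" and nB2: "T \<notin> B (Am, False)"
      using T unfolding ET_def I_def Ap_def Am_def by auto
    have Tsp: "T \<in> space ?P" using T unfolding ET_def by auto
    have finAp: "finite Ap" "finite Am" unfolding Ap_def Am_def by auto
    have "real n * (\<Sum>i\<in>Ap. q i) < real n * (pA Ap + t)"
      using nB1 Tsp FA[OF finAp(1)] unfolding B_def by (auto simp: algebra_simps)
    then have "(\<Sum>i\<in>Ap. q i) < pA Ap + t" using n by (simp add: mult_less_cancel_left_pos)
    then have s1: "(\<Sum>i\<in>Ap. q i - p i) < t"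
      unfolding pA_def p_def by (simp add: sum_subtractf)
    have "real n * (\<Sum>i\<in>Am. q i) > real n * (pA Am - t)"
      using nB2 Tsp FA[OF finAp(2)] unfolding B_def by (auto simp: algebra_simps)
    then have "(\<Sum>i\<in>Am. q i) > pA Am - t" using n by (simp add: mult_less_cancel_left_pos)
    then have s2: "(\<Sum>i\<in>Am. p i - q i) < t"
      unfolding pA_def p_def by (simp add: sum_subtractf)
    have "(\<Sum>i<K. \<bar>q i - p i\<bar>) = (\<Sum>i\<in>Ap. \<bar>q i - p i\<bar>) + (\<Sum>i\<in>Am. \<bar>q i - p i\<bar>)"
    proof -
      have "Ap \<subseteq> {..<K}" unfolding Ap_def by auto
      then show ?thesis unfolding Am_def by (simp add: sum.subset_diff[of Ap "{..<K}"] add.commute)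
    qed
    also have "(\<Sum>i\<in>Ap. \<bar>q i - p i\<bar>) = (\<Sum>i\<in>Ap. q i - p i)"
      by (rule sum.cong) (auto simp: Ap_def)
    also have "(\<Sum>i\<in>Am. \<bar>q i - p i\<bar>) = (\<Sum>i\<in>Am. p i - q i)"
      by (rule sum.cong) (auto simp: Ap_def Am_def)
    finally have "(\<Sum>i<K. \<bar>q i - p i\<bar>) \<le> 2 * t" using s1 s2 by simp
    also have "2 * t = sqrt ((2 * real K * ln 2 + 2 * ln (2 / \<delta>)) / real n)"
    proof -
      have "2 * t = sqrt (4 * (a / (2 * real n)))" unfolding t_def real_sqrt_mult by simp
      also have "4 * (a / (2 * real n)) = (2 * real K * ln 2 + 2 * ln (2 / \<delta>)) / real n"
        using n unfolding a_def by (simp add: field_simps)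
      finally show ?thesis .
    qed
    finally show ?thesis unfolding q_def p_def .
  qed
  show ?thesis using ETm ETp good by blast
qed



lemma cell_bound:
  fixes D :: "'z measure" and L :: "'z \<Rightarrow> real" and C :: "nat \<Rightarrow> 'z set"
  assumes D: "prob_space D" and Lm: "L \<in> borel_measurable D"
    and LZ: "\<forall>z\<in>Z. 0 \<le> L z \<and> L z \<le> M" and n: "n > 0"
    and part: "is_partition Z K C" and Cm: "\<forall>i<K. C i \<in> sets D"
    and SZ: "\<forall>j<n. S j \<in> Z" and rob: "robust Z K C L n S eps"
    and M0: "M \<ge> 0" and e0: "eps \<ge> 0" and i: "i < K"
  shows "(\<integral>z. indicator (C i) z * L z \<partial>D)
     \<le> (\<Sum>j<n. indicator (C i) (S j) * L (S j)) / real n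
        + M * \<bar>real (n_in C i n S) / real n - measure D (C i)\<bar> + real (n_in C i n S) / real n * eps"
proof -
  interpret D: prob_space D by (rule D)
  have CiZ: "C i \<subseteq> Z" using part i unfolding is_partition_def by auto
  have Cim: "C i \<in> sets D" using Cm i by auto
  define N where "N = real (n_in C i n S)"
  define s where "s = (\<Sum>j<n. indicator (C i) (S j) * L (S j))"
  define p where "p = measure D (C i)"
  define r where "r = N / real n"
  have Nsum: "N = (\<Sum>j<n. indicator (C i) (S j))" unfolding N_def by (rule n_in_sum)
  have s0: "s \<ge> 0" unfolding s_def using SZ LZ by (auto intro!: sum_nonneg simp: indicator_def)
  have p0: "p \<ge> 0" unfolding p_def by simp
  have N0: "N \<ge> 0" unfolding N_def by simp
  have intg1: "integrable D (\<lambda>z. indicator (C i) z * L z)"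
  proof (rule D.integrable_const_bound[where B=M])
    show "AE z in D. norm (indicator (C i) z * L z) \<le> M"
      by (intro AE_I2) (use CiZ LZ M0 in \<open>auto simp: indicator_def\<close>)
    show "(\<lambda>z. indicator (C i) z * L z) \<in> borel_measurable D"
      using Lm Cim by measurable
  qed
  have intc: "(\<integral>z. indicator (C i) z * c \<partial>D) = p * c" for c :: real
  proof -
    have "C i \<inter> space D = C i" using Cim sets.sets_into_space by blast
    then show ?thesis using Cim unfolding p_def by simp
  qed
  have intgc: "integrable D (\<lambda>z. indicator (C i) z * c)" for c :: real
    using Cim by (intro integrable_mult_left) (auto intro!: integrable_real_indicator simp: D.emeasure_eq_measure)
  have bound: "(\<integral>z. indicator (C i) z * L z \<partial>D) \<le> p * c"
    if cb: "\<And>z. z \<in> C i \<Longrightarrow> L z \<le> c" and "c \<ge> 0" for c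
  proof -
    have "(\<integral>z. indicator (C i) z * L z \<partial>D) \<le> (\<integral>z. indicator (C i) z * c \<partial>D)"
      by (rule integral_mono[OF intg1 intgc]) (auto simp: indicator_def cb)
    then show ?thesis by (simp only: intc)
  qed
  show ?thesis
  proof (cases "N = 0")
    case True
    have "\<forall>j<n. S j \<notin> C i"
    proof (intro allI impI)
      fix j assume "j < n"
      show "S j \<notin> C i"
      proof
        assume "S j \<in> C i"
        then have "j \<in> {j \<in> {..<n}. S j \<in> C i}" using \<open>j < n\<close> by auto
        then have "n_in C i n S > 0" unfolding n_in_def by (auto simp: card_gt_0_iff)
        then show False using True unfolding N_def by simp
      qed
    qed
    then have "s = 0" unfolding s_def by simp
    have "(\<integral>z. indicator (C i) z * L z \<partial>D) \<le> p * M"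
      by (rule bound) (use CiZ LZ M0 in auto)
    then show ?thesis using True \<open>s = 0\<close> p0 M0
      unfolding N_def[symmetric] s_def[symmetric] p_def[symmetric] by (simp add: mult.commute)
  next
    case False
    then have Npos: "N > 0" using N0 by simp
    define c where "c = min M (s / N + eps)"
    have c0: "c \<ge> 0" unfolding c_def using M0 s0 Npos e0 by simp
    have cb: "L z \<le> c" if z: "z \<in> C i" for z
    proof -
      have zZ: "z \<in> Z" using z CiZ by auto
      have "indicator (C i) (S j) * L z \<le> indicator (C i) (S j) * (L (S j) + eps)" if "j < n" for j
      proof (cases "S j \<in> C i")
        case True
        have "\<bar>L (S j) - L z\<bar> \<le> eps"
          using rob True z zZ i that unfolding robust_def by auto
        then show ?thesis using True by simp
      qed simp
      then have "(\<Sum>j<n. indicator (C i) (S j) * L z) \<le> (\<Sum>j<n. indicator (C i) (S j) * (L (S j) + eps))"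
        by (intro sum_mono) auto
      then have "N * L z \<le> s + N * eps"
        unfolding Nsum s_def by (simp add: sum_distrib_right distrib_left sum.distrib)
      then have "L z \<le> s / N + eps" using Npos by (simp add: field_simps)
      moreover have "L z \<le> M" using LZ zZ by auto
      ultimately show ?thesis unfolding c_def by simp
    qed
    have I: "(\<integral>z. indicator (C i) z * L z \<partial>D) \<le> p * c" by (rule bound[OF cb c0])
    have rsn: "r * (s / N) = s / real n" unfolding r_def using Npos n by (simp add: field_simps)
    have key: "p * c \<le> r * (s / N + eps) + M * \<bar>r - p\<bar>"
    proof (cases "p \<le> r")
      case True
      have "p * c \<le> r * c" using True c0 by (simp add: mult_right_mono)
      also have "\<dots> \<le> r * (s / N + eps)" unfolding c_def r_def using Npos n N0
        by (intro mult_left_mono) auto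
      finally show ?thesis using M0 by (smt (verit) abs_ge_zero mult_nonneg_nonneg)
    next
      case False
      have "p * c = r * c + (p - r) * c" by (simp add: algebra_simps)
      also have "r * c \<le> r * (s / N + eps)" unfolding c_def r_def using Npos n N0
        by (intro mult_left_mono) auto
      also have "(p - r) * c \<le> (p - r) * M" using False unfolding c_def by (intro mult_left_mono) auto
      finally show ?thesis using False by (simp add: mult.commute)
    qed
    show ?thesis using I key rsn
      unfolding N_def[symmetric] s_def[symmetric] p_def[symmetric] r_def[symmetric]
      by (simp add: distrib_left abs_minus_commute)
  qed
qed



lemma total_bound:
  fixes D :: "'z measure" and L :: "'z \<Rightarrow> real" and C :: "nat \<Rightarrow> 'z set"
  assumes D: "prob_space D" and Lm: "L \<in> borel_measurable D"
    and Zm: "Z \<in> sets D" and Z1: "measure D Z = 1"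
    and LZ: "\<forall>z\<in>Z. 0 \<le> L z \<and> L z \<le> M" and n: "n > 0"
    and part: "is_partition Z K C" and Cm: "\<forall>i<K. C i \<in> sets D"
    and SZ: "\<forall>j<n. S j \<in> Z" and rob: "robust Z K C L n S eps"
    and M0: "M \<ge> 0" and e0: "eps \<ge> 0"
  shows "(\<integral>z. L z \<partial>D) \<le> (\<Sum>j<n. L (S j)) / real n
        + M * (\<Sum>i<K. \<bar>real (n_in C i n S) / real n - measure D (C i)\<bar>) + eps"
proof -
  interpret D: prob_space D by (rule D)
  have AEZ: "AE z in D. z \<in> Z" using Z1 by (intro D.AE_prob_1) simp
  have indm: "(\<lambda>z. indicator (C i) z * L z) \<in> borel_measurable D" if "i < K" for i
  proof -
    have "C i \<in> sets D" using Cm that by auto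
    then show ?thesis using Lm by measurable
  qed
  have intg1: "integrable D (\<lambda>z. indicator (C i) z * L z)" if i: "i < K" for i
  proof (rule D.integrable_const_bound[where B=M])
    have "C i \<subseteq> Z" using part i unfolding is_partition_def by auto
    then show "AE z in D. norm (indicator (C i) z * L z) \<le> M"
      by (intro AE_I2) (use LZ M0 in \<open>auto simp: indicator_def\<close>)
    show "(\<lambda>z. indicator (C i) z * L z) \<in> borel_measurable D" by (rule indm[OF i])
  qed
  have "(\<integral>z. L z \<partial>D) = (\<integral>z. (\<Sum>i<K. indicator (C i) z * L z) \<partial>D)"
  proof (rule integral_cong_AE)
    show "L \<in> borel_measurable D" by (rule Lm)
    show "(\<lambda>z. \<Sum>i<K. indicator (C i) z * L z) \<in> borel_measurable D"
      using indm by (intro borel_measurable_sum) auto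
    show "AE z in D. L z = (\<Sum>i<K. indicator (C i) z * L z)"
      using AEZ by eventually_elim (simp add: sum_distrib_right[symmetric] sum_ind_eq1[OF part])
  qed
  also have "\<dots> = (\<Sum>i<K. \<integral>z. indicator (C i) z * L z \<partial>D)"
    by (rule Bochner_Integration.integral_sum) (use intg1 in auto)
  also have "\<dots> \<le> (\<Sum>i<K. (\<Sum>j<n. indicator (C i) (S j) * L (S j)) / real n
        + M * \<bar>real (n_in C i n S) / real n - measure D (C i)\<bar> + real (n_in C i n S) / real n * eps)"
    by (rule sum_mono) (rule cell_bound[OF D Lm LZ n part Cm SZ rob M0 e0], simp)
  also have "\<dots> = (\<Sum>i<K. \<Sum>j<n. indicator (C i) (S j) * L (S j)) / real n
        + M * (\<Sum>i<K. \<bar>real (n_in C i n S) / real n - measure D (C i)\<bar>)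
        + (\<Sum>i<K. real (n_in C i n S)) / real n * eps"
    by (simp add: sum.distrib sum_divide_distrib sum_distrib_left sum_distrib_right)
  also have "(\<Sum>i<K. \<Sum>j<n. indicator (C i) (S j) * L (S j)) = (\<Sum>j<n. L (S j))"
  proof -
    have "(\<Sum>i<K. \<Sum>j<n. indicator (C i) (S j) * L (S j)) = (\<Sum>j<n. \<Sum>i<K. indicator (C i) (S j) * L (S j))"
      by (rule sum.swap)
    also have "\<dots> = (\<Sum>j<n. L (S j))"
      using SZ by (intro sum.cong) (simp_all add: sum_distrib_right[symmetric] sum_ind_eq1[OF part])
    finally show ?thesis .
  qed
  also have "(\<Sum>i<K. real (n_in C i n S)) = real n"
  proof -
    have "(\<Sum>i<K. real (n_in C i n S)) = (\<Sum>i<K. \<Sum>j<n. indicator (C i) (S j))"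
      by (simp only: n_in_sum)
    also have "\<dots> = (\<Sum>j<n. \<Sum>i<K. indicator (C i) (S j))" by (rule sum.swap)
    also have "\<dots> = (\<Sum>j<n. 1)"
      using SZ by (intro sum.cong) (simp_all add: sum_ind_eq1[OF part])
    finally show ?thesis by simp
  qed
  finally show ?thesis using n by simp
qed



theorem theorem1:
  fixes X :: "(real ^ 'd) set" and Y :: "real set"
    and DS DT :: "((real ^ 'd) \<times> real) measure"
    and l :: "real \<Rightarrow> real \<Rightarrow> real" and f :: "'p \<Rightarrow> real ^ 'd \<Rightarrow> real"
    and M :: real and n K :: nat and C :: "nat \<Rightarrow> ((real ^ 'd) \<times> real) set"
    and \<delta> :: real
  assumes "prob_space DS" and "prob_space DT"
    and "sets DS = sets borel" and "sets DT = sets borel"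
    and "X \<times> Y \<in> sets borel"
    and "measure DS (X \<times> Y) = 1" and "measure DT (X \<times> Y) = 1"
    and "\<And>th. loss_at l f th \<in> borel_measurable borel"
    and "\<And>th z. z \<in> X \<times> Y \<Longrightarrow> 0 \<le> loss_at l f th z \<and> loss_at l f th z \<le> M"
    and "n > 0"
    and "is_partition (X \<times> Y) K C" and "\<And>i. i < K \<Longrightarrow> C i \<in> sets borel"
    and "0 < \<delta>" and "\<delta> < 1"
  shows "\<exists>E \<in> sets (PiM {..<n} (\<lambda>_. DS) \<Otimes>\<^sub>M PiM {..<n} (\<lambda>_. DT)).
           measure (PiM {..<n} (\<lambda>_. DS) \<Otimes>\<^sub>M PiM {..<n} (\<lambda>_. DT)) E \<ge> 1 - \<delta> \<and>
           (\<forall>(S, T) \<in> E. \<forall>th eps.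
              robust (X \<times> Y) K C (loss_at l f th) n S eps \<longrightarrow>
              expected_risk DT l f th
                \<le> empirical_risk n S l f th + M * d_epsK K C n S T + 2 * eps
                   + 3 * M * sqrt ((2 * real K * ln 2 + 2 * ln (2 / \<delta>)) / real n))"
proof -
  note DS = assms(1) and DT = assms(2) and sDS = assms(3) and sDT = assms(4) and Zb = assms(5)
    and ZS1 = assms(6) and ZT1 = assms(7) and Lb = assms(8) and LZ = assms(9) and n = assms(10)
    and part = assms(11) and Cb = assms(12) and d0 = assms(13) and d1 = assms(14)
  let ?Z = "X \<times> Y"
  let ?PS = "PiM {..<n} (\<lambda>_. DS)" and ?PT = "PiM {..<n} (\<lambda>_. DT)"
  interpret PS: prob_space ?PS by (rule prob_space_PiM) (use DS in auto)
  interpret PT: prob_space ?PT by (rule prob_space_PiM) (use DT in auto)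
  interpret DS: prob_space DS by (rule DS)
  interpret FP: finite_product_prob_space "\<lambda>_. DS" "{..<n}"
    by unfold_locales (use DS in auto)
  have CmT: "\<And>i. i < K \<Longrightarrow> C i \<in> sets DT" using Cb sDT by auto
  have disj: "\<forall>i<K. \<forall>j<K. i \<noteq> j \<longrightarrow> C i \<inter> C j = {}" using part unfolding is_partition_def by auto
  obtain ET where ETm: "ET \<in> sets ?PT" and ETp: "measure ?PT ET \<ge> 1 - \<delta>"
    and ETg: "\<forall>T\<in>ET. (\<Sum>i<K. \<bar>real (n_in C i n T) / real n - measure DT (C i)\<bar>)
               \<le> sqrt ((2 * real K * ln 2 + 2 * ln (2 / \<delta>)) / real n)"
    using conc[OF DT n CmT disj d0 d1] by blast
  define ES where "ES = PiE {..<n} (\<lambda>_. ?Z)"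
  have ZS: "?Z \<in> sets DS" using Zb sDS by auto
  have ESm: "ES \<in> sets ?PS" unfolding ES_def using ZS by (intro sets_PiM_I_finite) auto
  have ESp: "measure ?PS ES = 1"
    unfolding ES_def using FP.prob_times[of "\<lambda>_. ?Z"] ZS ZS1 by simp
  define E where "E = ES \<times> ET"
  have Em: "E \<in> sets (?PS \<Otimes>\<^sub>M ?PT)" unfolding E_def using ESm ETm by (rule pair_measureI)
  have Ep: "measure (?PS \<Otimes>\<^sub>M ?PT) E = measure ?PS ES * measure ?PT ET"
    unfolding E_def measure_def using ESm ETm by (simp add: PT.emeasure_pair_measure_Times enn2real_mult)
  have main: "expected_risk DT l f th
                \<le> empirical_risk n S l f th + M * d_epsK K C n S T + 2 * eps
                   + 3 * M * sqrt ((2 * real K * ln 2 + 2 * ln (2 / \<delta>)) / real n)"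
    if ST: "(S, T) \<in> E" and rob: "robust ?Z K C (loss_at l f th) n S eps" for S T th eps
  proof -
    let ?L = "loss_at l f th"
    have SZ: "\<forall>j<n. S j \<in> ?Z" using ST unfolding E_def ES_def by auto
    have TE: "T \<in> ET" using ST unfolding E_def by auto
    have S0: "S 0 \<in> ?Z" using SZ n by auto
    have M0: "M \<ge> 0" using LZ[OF S0, of th] by linarith
    have "S 0 \<in> (\<Union>i<K. C i)" using S0 part unfolding is_partition_def by simp
    then obtain i0 where i0: "i0 < K" "S 0 \<in> C i0" by blast
    have e0: "eps \<ge> 0"
    proof -
      have "S 0 \<in> S ` {..<n}" using n by auto
      note r = rob[unfolded robust_def, rule_format, OF this S0 i0(1)]
      have "\<bar>?L (S 0) - ?L (S 0)\<bar> \<le> eps" using i0(2) by (intro r) simp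
      then show ?thesis by simp
    qed
    have Lm: "?L \<in> borel_measurable DT" by (subst measurable_cong_sets[OF sDT refl]) (rule Lb)
    have LZ': "\<forall>z\<in>?Z. 0 \<le> ?L z \<and> ?L z \<le> M" using LZ by auto
    have ZT: "?Z \<in> sets DT" using Zb sDT by auto
    have CmT': "\<forall>i<K. C i \<in> sets DT" using CmT by auto
    have tb: "(\<integral>z. ?L z \<partial>DT) \<le> (\<Sum>j<n. ?L (S j)) / real n
        + M * (\<Sum>i<K. \<bar>real (n_in C i n S) / real n - measure DT (C i)\<bar>) + eps"
      by (rule total_bound[OF DT Lm ZT ZT1 LZ' n part CmT' SZ rob M0 e0])
    have tri: "(\<Sum>i<K. \<bar>real (n_in C i n S) / real n - measure DT (C i)\<bar>)
        \<le> d_epsK K C n S T + (\<Sum>i<K. \<bar>real (n_in C i n T) / real n - measure DT (C i)\<bar>)"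
      unfolding d_epsK_def sum.distrib[symmetric] by (rule sum_mono) linarith
    have cb: "(\<Sum>i<K. \<bar>real (n_in C i n T) / real n - measure DT (C i)\<bar>)
               \<le> 3 * sqrt ((2 * real K * ln 2 + 2 * ln (2 / \<delta>)) / real n)"
    proof -
      have "(\<Sum>i<K. \<bar>real (n_in C i n T) / real n - measure DT (C i)\<bar>)
               \<le> sqrt ((2 * real K * ln 2 + 2 * ln (2 / \<delta>)) / real n)" using ETg TE by blast
      moreover have "sqrt ((2 * real K * ln 2 + 2 * ln (2 / \<delta>)) / real n) \<ge> 0"
        using d0 d1 n by (intro real_sqrt_ge_zero) (simp add: add_nonneg_nonneg)
      ultimately show ?thesis by linarith
    qed
    have "M * (\<Sum>i<K. \<bar>real (n_in C i n S) / real n - measure DT (C i)\<bar>)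
        \<le> M * d_epsK K C n S T + 3 * M * sqrt ((2 * real K * ln 2 + 2 * ln (2 / \<delta>)) / real n)"
    proof -
      have "M * (\<Sum>i<K. \<bar>real (n_in C i n S) / real n - measure DT (C i)\<bar>)
          \<le> M * (d_epsK K C n S T + 3 * sqrt ((2 * real K * ln 2 + 2 * ln (2 / \<delta>)) / real n))"
        using tri cb M0 by (intro mult_left_mono) auto
      then show ?thesis by (simp add: algebra_simps)
    qed
    then show ?thesis using tb e0 unfolding expected_risk_def empirical_risk_def by linarith
  qed
  show ?thesis
  proof (rule bexI[OF _ Em], intro conjI)
    show "measure (?PS \<Otimes>\<^sub>M ?PT) E \<ge> 1 - \<delta>" using Ep ESp ETp by simp
    show "\<forall>(S, T) \<in> E. \<forall>th eps.
              robust (X \<times> Y) K C (loss_at l f th) n S eps \<longrightarrow>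
              expected_risk DT l f th
                \<le> empirical_risk n S l f th + M * d_epsK K C n S T + 2 * eps
                   + 3 * M * sqrt ((2 * real K * ln 2 + 2 * ln (2 / \<delta>)) / real n)"
      using main by blast
  qed
qed


end
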